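(* Let $\Phi:S_{m,n}\to S_{m',n'}$ be an affine isomorphism. Let $\omega_1\ne\omega_2$ be pure states in $K_m$ and $\sigma_1\neq\sigma_2$ pure states in $K_n$. Then there do not exist pure states $\rho_1,\rho_2,\rho_3\in\partial_eK_{m'}$ and $\tau_1,\tau_2,\tau_3\in\partial_eK_{n'}$ such that simultaneously $\Phi(\omega_1\otimes\sigma_1)=\rho_1\otimes\tau_1$, $\Phi(\omega_1\otimes\sigma_2)=\rho_1\otimes\tau_2$, $\Phi(\omega_2\otimes\sigma_1)=\rho_2\otimes\tau_3$, and $\Phi(\omega_2\otimes\sigma_2)=\rho_3\otimes\tau_3$.
   Context: $K_p$ denotes the state space of $\mathcal{B}(\mathbb{C}^p)$; $K_{m,n}$ the state space of $\mathcal{B}(\mathbb{C}^m\otimes\mathbb{C}^n)\cong\mathcal{B}(\mathbb{C}^m)\otimes\mathcal{B}(\mathbb{C}^n)$; $S_{m,n}\subseteq K_{m,n}$ the convex set of separable states (convex combinations of product states $\omega\otimes\sigma$, $\omega\in K_m$, $\sigma\in K_n$). $\partial_eC$ denotes the set of extreme points of a convex set $C$. An affine isomorphism is a bijection preserving convex combinations. *)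

theory Defs
  imports "HOL-Analysis.Analysis"
begin

text \<open>Complex p x p matrices, p = CARD('p), are modelled as complex^'p^'p.
  States of B(C^p) are identified with density matrices.\<close>

definition psd_mat :: "complex^'p^'p \<Rightarrow> bool" where
  "psd_mat A \<longleftrightarrow> (\<forall>v::complex^'p.
     let q = (\<Sum>i\<in>UNIV. \<Sum>j\<in>UNIV. cnj (v$i) * A$i$j * v$j) in Im q = 0 \<and> Re q \<ge> 0)"

definition mat_trace :: "complex^'p^'p \<Rightarrow> complex" where
  "mat_trace A = (\<Sum>i\<in>UNIV. A$i$i)"

definition state_space :: "(complex^'p^'p) set" where
  "state_space = {A. psd_mat A \<and> mat_trace A = 1}"

definition kron :: "complex^'m^'m \<Rightarrow> complex^'n^'n \<Rightarrow> complex^('m \<times> 'n)^('m \<times> 'n)" where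
  "kron A B = (\<chi> a b. A$(fst a)$(fst b) * B$(snd a)$(snd b))"

definition separable_states :: "(complex^('m::finite \<times> 'n::finite)^('m \<times> 'n)) set" where
  "separable_states = convex hull {kron \<omega> \<sigma> | \<omega> \<sigma>.
      \<omega> \<in> (state_space :: (complex^'m^'m) set) \<and> \<sigma> \<in> (state_space :: (complex^'n^'n) set)}"

definition pure_state :: "complex^'p^'p \<Rightarrow> bool" where
  "pure_state \<omega> \<longleftrightarrow> \<omega> extreme_point_of (state_space :: (complex^'p^'p) set)"

definition affine_iso :: "('a::real_vector \<Rightarrow> 'b::real_vector) \<Rightarrow> 'a set \<Rightarrow> 'b set \<Rightarrow> bool" where
  "affine_iso f S T \<longleftrightarrow> bij_betw f S T \<and>
     (\<forall>x\<in>S. \<forall>y\<in>S. \<forall>t::real. 0 \<le> t \<and> t \<le> 1 \<longrightarrow>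
        f ((1 - t) *\<^sub>R x + t *\<^sub>R y) = (1 - t) *\<^sub>R f x + t *\<^sub>R f y)"

end

theory Submission
  imports Defs
begin

definition bf :: "complex^'p \<Rightarrow> complex^'p^'p \<Rightarrow> complex^'p \<Rightarrow> complex" where
  "bf x A y = (\<Sum>i\<in>UNIV. \<Sum>j\<in>UNIV. cnj (x$i) * A$i$j * y$j)"

lemma psd_iff: "psd_mat A \<longleftrightarrow> (\<forall>v. Im (bf v A v) = 0 \<and> Re (bf v A v) \<ge> 0)"
  unfolding psd_mat_def bf_def Let_def by simp

lemma bf_add_left: "bf (x + y) A z = bf x A z + bf y A z"
  unfolding bf_def by (simp add: algebra_simps sum.distrib)
lemma bf_add_right: "bf z A (x + y) = bf z A x + bf z A y"
  unfolding bf_def by (simp add: algebra_simps sum.distrib)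
lemma bf_diff_left: "bf (x - y) A z = bf x A z - bf y A z"
  unfolding bf_def by (simp add: algebra_simps sum_subtractf)
lemma bf_diff_right: "bf z A (x - y) = bf z A x - bf z A y"
  unfolding bf_def by (simp add: algebra_simps sum_subtractf)
lemma bf_smult_left: "bf (c *s x) A z = cnj c * bf x A z"
  unfolding bf_def by (simp add: algebra_simps sum_distrib_left)
lemma bf_smult_right: "bf z A (c *s x) = c * bf z A x"
  unfolding bf_def by (simp add: algebra_simps sum_distrib_left)
lemma bf_axis_axis: "bf (axis i 1) A (axis j 1) = A$i$j"
proof -
  have 1: "\<And>ia. (\<Sum>ja\<in>UNIV. cnj (axis i 1 $ ia) * A $ ia $ ja * (axis j 1 $ ja)) = cnj (axis i 1 $ ia) * A $ ia $ j"
  proof -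
    fix ia
    have "(\<Sum>ja\<in>UNIV. cnj (axis i 1 $ ia) * A $ ia $ ja * (axis j 1 $ ja)) = (\<Sum>ja\<in>UNIV. if ja = j then cnj (axis i 1 $ ia) * A $ ia $ ja else 0)"
      by (rule sum.cong) (auto simp: axis_def)
    then show "(\<Sum>ja\<in>UNIV. cnj (axis i 1 $ ia) * A $ ia $ ja * (axis j 1 $ ja)) = cnj (axis i 1 $ ia) * A $ ia $ j"
      by (simp add: sum.delta')
  qed
  have "(\<Sum>ia\<in>UNIV. cnj (axis i 1 $ ia) * A $ ia $ j) = (\<Sum>ia\<in>UNIV. if ia = i then A $ ia $ j else 0)"
    by (rule sum.cong) (auto simp: axis_def)
  then show ?thesis unfolding bf_def 1 by (simp add: sum.delta')
qed
lemma bf_matadd: "bf x (A + B) y = bf x A y + bf x B y"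
  unfolding bf_def by (simp add: algebra_simps sum.distrib)
lemma bf_matdiff: "bf x (A - B) y = bf x A y - bf x B y"
  unfolding bf_def by (simp add: algebra_simps sum_subtractf)
lemma bf_scaleR: "bf x (r *\<^sub>R A) y = of_real r * bf x A y"
  unfolding bf_def vector_scaleR_component by (simp add: scaleR_conv_of_real algebra_simps sum_distrib_left)

lemma real_lin_zero:
  assumes "\<And>r::real. Im (of_real r * P + c) = 0 \<and> Re (of_real r * P + c) \<ge> 0"
  shows "P = 0"
proof -
  have c: "Im c = 0" using assms[of 0] by simp
  have "Im P = 0" using assms[of 1] c by simp
  moreover have "Re P = 0"
  proof (rule ccontr)
    assume h: "Re P \<noteq> 0"
    define r where "r = - (\<bar>Re c\<bar> + 1) / Re P"
    have "Re (of_real r * P + c) = r * Re P + Re c" by simp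
    also have "\<dots> = - (\<bar>Re c\<bar> + 1) + Re c" using h by (simp add: r_def)
    also have "\<dots> < 0" by linarith
    finally show False using assms[of r] by linarith
  qed
  ultimately show ?thesis by (simp add: complex_eq_iff)
qed

lemma bf_expand:
  "bf (s *s x + y) A (s *s x + y) = cnj s * s * bf x A x + cnj s * bf x A y + s * bf y A x + bf y A y"
  by (simp add: bf_add_left bf_add_right bf_smult_left bf_smult_right algebra_simps)

lemma psd_zero:
  assumes "psd_mat A" "bf x A x = 0"
  shows "bf x A y = 0 \<and> bf y A x = 0"
proof -
  have p: "\<And>v. Im (bf v A v) = 0 \<and> Re (bf v A v) \<ge> 0" using assms(1) by (simp add: psd_iff)
  have "bf x A y + bf y A x = 0"
  proof (rule real_lin_zero[where c = "bf y A y"])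
    fix r :: real
    have "bf ((of_real r) *s x + y) A ((of_real r) *s x + y) = of_real r * (bf x A y + bf y A x) + bf y A y"
      by (simp only: bf_expand assms(2)) (simp add: algebra_simps)
    then show "Im (of_real r * (bf x A y + bf y A x) + bf y A y) = 0 \<and> Re (of_real r * (bf x A y + bf y A x) + bf y A y) \<ge> 0"
      using p by metis
  qed
  moreover have "\<i> * (bf y A x - bf x A y) = 0"
  proof (rule real_lin_zero[where c = "bf y A y"])
    fix r :: real
    have "bf ((\<i> * of_real r) *s x + y) A ((\<i> * of_real r) *s x + y) = of_real r * (\<i> * (bf y A x - bf x A y)) + bf y A y"
      by (simp only: bf_expand assms(2)) (simp add: algebra_simps)
    then show "Im (of_real r * (\<i> * (bf y A x - bf x A y)) + bf y A y) = 0 \<and> Re (of_real r * (\<i> * (bf y A x - bf x A y)) + bf y A y) \<ge> 0"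
      using p by metis
  qed
  ultimately have "bf y A x = bf x A y" "bf x A y + bf y A x = 0" by auto
  then show ?thesis by simp
qed


lemma psd_herm:
  assumes "psd_mat A"
  shows "A$j$i = cnj (A$i$j)"
proof -
  have p: "\<And>v. Im (bf v A v) = 0" using assms by (simp add: psd_iff)
  let ?x = "axis i (1::complex)" and ?y = "axis j (1::complex)"
  have d: "\<And>k. Im (A$k$k) = 0" using p[of "axis _ 1"] by (simp add: bf_axis_axis)
  have "bf (1 *s ?x + ?y) A (1 *s ?x + ?y) = A$i$i + A$i$j + A$j$i + A$j$j"
    by (simp only: bf_expand bf_axis_axis) simp
  then have 1: "Im (A$i$j) + Im (A$j$i) = 0" using p[of "1 *s ?x + ?y"] d[of i] d[of j] by simp
  have "bf (1 *s ?x + \<i> *s ?y) A (1 *s ?x + \<i> *s ?y) = A$i$i + \<i> * A$i$j - \<i> * A$j$i + A$j$j"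
    by (simp only: bf_expand bf_smult_left bf_smult_right bf_axis_axis) (simp add: algebra_simps)
  then have 2: "Re (A$i$j) - Re (A$j$i) = 0" using p[of "1 *s ?x + \<i> *s ?y"] d[of i] d[of j] by simp
  show ?thesis using 1 2 by (simp add: complex_eq_iff)
qed


lemma bf_herm:
  assumes "\<And>i j. A$j$i = cnj (A$i$j)"
  shows "bf y A x = cnj (bf x A y)"
proof -
  have "bf y A x = (\<Sum>j\<in>UNIV. \<Sum>i\<in>UNIV. cnj (y$j) * A$j$i * x$i)" by (simp add: bf_def)
  also have "\<dots> = (\<Sum>i\<in>UNIV. \<Sum>j\<in>UNIV. cnj (y$j) * A$j$i * x$i)" by (rule sum.swap)
  also have "\<dots> = (\<Sum>i\<in>UNIV. \<Sum>j\<in>UNIV. cnj (cnj (x$i) * A$i$j * y$j))"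
    by (intro sum.cong refl, subst assms[of _ _], simp add: mult_ac)
  also have "\<dots> = cnj (bf x A y)" by (simp add: bf_def)
  finally show ?thesis .
qed

definition rank1 :: "complex^'p \<Rightarrow> complex^'p^'p" where
  "rank1 u = (\<chi> k l. u$k * cnj (u$l))"

definition ip :: "complex^'p \<Rightarrow> complex^'p \<Rightarrow> complex" where
  "ip u y = (\<Sum>l\<in>UNIV. cnj (u$l) * y$l)"

lemma bf_rank1: "bf x (rank1 u) y = cnj (ip u x) * ip u y"
proof -
  have "bf x (rank1 u) y = (\<Sum>k\<in>UNIV. \<Sum>l\<in>UNIV. (cnj (x$k) * u$k) * (cnj (u$l) * y$l))"
    by (simp add: bf_def rank1_def mult_ac)
  also have "\<dots> = (\<Sum>k\<in>UNIV. cnj (x$k) * u$k) * (\<Sum>l\<in>UNIV. cnj (u$l) * y$l)"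
    by (simp add: sum_product)
  finally show ?thesis by (simp add: ip_def mult_ac)
qed

lemma trace_rank1: "mat_trace (rank1 u) = ip u u"
  by (simp add: mat_trace_def rank1_def ip_def mult_ac)

lemma ip_add: "ip u (x + y) = ip u x + ip u y"
  by (simp add: ip_def algebra_simps sum.distrib)
lemma ip_diff: "ip u (x - y) = ip u x - ip u y"
  by (simp add: ip_def algebra_simps sum_subtractf)
lemma ip_smult: "ip u (c *s y) = c * ip u y"
  by (simp add: ip_def algebra_simps sum_distrib_left)
lemma ip_axis: "ip u (axis k 1) = cnj (u$k)"
proof -
  have "ip u (axis k 1) = (\<Sum>l\<in>UNIV. if l = k then cnj (u$l) else 0)"
    unfolding ip_def by (rule sum.cong) (auto simp: axis_def)
  then show ?thesis by (simp add: sum.delta')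
qed

lemma state_eq_rank1:
  fixes \<rho> :: "complex^'p^'p"
  assumes rho: "psd_mat \<rho>" "mat_trace \<rho> = 1"
    and N: "ip u u = 1"
    and h: "\<And>x. bf x (rank1 u) x = 0 \<Longrightarrow> bf x \<rho> x = 0"
  shows "\<rho> = rank1 u"
proof -
  define perp where "perp a = a - ip u a *s u" for a :: "complex^'p"
  have ipp: "ip u (perp a) = 0" for a
    by (simp add: perp_def ip_diff ip_smult N)
  have z: "bf (perp a) \<rho> y = 0 \<and> bf y \<rho> (perp a) = 0" for a y
  proof (rule psd_zero[OF rho(1)])
    show "bf (perp a) \<rho> (perp a) = 0" by (rule h) (simp add: bf_rank1 ipp)
  qed
  have dec: "a = perp a + ip u a *s u" for a by (simp add: perp_def)
  define m where "m = bf u \<rho> u"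
  have ent: "\<rho>$k$l = u$k * cnj (u$l) * m" for k l
  proof -
    have "\<rho>$k$l = bf (axis k 1) \<rho> (axis l 1)" by (simp add: bf_axis_axis)
    also have "\<dots> = bf (perp (axis k 1) + ip u (axis k 1) *s u) \<rho> (axis l 1)"
      using dec[of "axis k 1"] by simp
    also have "\<dots> = u$k * bf u \<rho> (axis l 1)"
      by (simp add: bf_add_left bf_smult_left z ip_axis)
    also have "bf u \<rho> (axis l 1) = bf u \<rho> (perp (axis l 1) + ip u (axis l 1) *s u)"
      using dec[of "axis l 1"] by simp
    also have "\<dots> = cnj (u$l) * m"
      by (simp add: bf_add_right bf_smult_right z ip_axis m_def)
    finally show ?thesis by (simp add: mult_ac)
  qed
  have "1 = mat_trace \<rho>" using rho by simp
  also have "\<dots> = (\<Sum>k\<in>UNIV. u$k * cnj (u$k)) * m"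
    by (simp add: mat_trace_def ent sum_distrib_right)
  also have "(\<Sum>k\<in>UNIV. u$k * cnj (u$k)) = 1" using N by (simp add: ip_def mult_ac)
  finally have "m = 1" by simp
  then show ?thesis by (simp add: vec_eq_iff ent rank1_def)
qed

lemma bf_axis_right: "bf x A (axis j 1) = (\<Sum>k\<in>UNIV. cnj (x$k) * A$k$j)"
proof -
  have "\<And>k. (\<Sum>l\<in>UNIV. cnj (x$k) * A$k$l * axis j 1 $ l) = (\<Sum>l\<in>UNIV. if l = j then cnj (x$k) * A$k$l else 0)"
    by (rule sum.cong) (auto simp: axis_def)
  then show ?thesis unfolding bf_def by (simp add: sum.delta')
qed

lemma bf_axis_left: "bf (axis i 1) A y = (\<Sum>l\<in>UNIV. A$i$l * y$l)"
proof -
  have "(\<Sum>k\<in>UNIV. \<Sum>l\<in>UNIV. cnj (axis i 1 $ k) * A$k$l * y $ l) = (\<Sum>k\<in>UNIV. if k = i then (\<Sum>l\<in>UNIV. A$k$l * y$l) else 0)"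
    by (rule sum.cong) (auto simp: axis_def)
  then show ?thesis unfolding bf_def by (simp add: sum.delta')
qed

lemma trace_diff: "mat_trace (A - B) = mat_trace A - mat_trace B"
  by (simp add: mat_trace_def sum_subtractf)
lemma trace_add: "mat_trace (A + B) = mat_trace A + mat_trace B"
  by (simp add: mat_trace_def sum.distrib)
lemma trace_scaleR: "mat_trace (r *\<^sub>R A) = of_real r * mat_trace A"
  unfolding mat_trace_def vector_scaleR_component by (simp add: scaleR_conv_of_real sum_distrib_left)

lemma psd_diag: "psd_mat A \<Longrightarrow> Im (A$k$k) = 0 \<and> Re (A$k$k) \<ge> 0"
  by (metis bf_axis_axis psd_iff)

lemma psd_scaleR: "psd_mat A \<Longrightarrow> r \<ge> 0 \<Longrightarrow> psd_mat (r *\<^sub>R A)"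
  by (simp add: psd_iff bf_scaleR)

lemma psd_trace_zero:
  assumes "psd_mat A" "mat_trace A = 0"
  shows "A = 0"
proof -
  have d: "\<And>k. Im (A$k$k) = 0 \<and> Re (A$k$k) \<ge> 0" using psd_diag[OF assms(1)] by blast
  have "(\<Sum>k\<in>UNIV. Re (A$k$k)) = 0" using assms(2) by (simp add: mat_trace_def flip: Re_sum)
  then have "\<And>k. Re (A$k$k) = 0" using d by (simp add: sum_nonneg_eq_0_iff)
  then have "\<And>k. A$k$k = 0" using d by (simp add: complex_eq_iff)
  then have "\<And>k l. A$k$l = 0"
    using psd_zero[OF assms(1)] bf_axis_axis by metis
  then show ?thesis by (simp add: vec_eq_iff)
qed

lemma pure_rank1:
  fixes \<omega> :: "complex^'p^'p"
  assumes "pure_state \<omega>"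
  shows "\<exists>u. \<omega> = rank1 u \<and> ip u u = 1"
proof -
  have ext: "\<omega> \<in> state_space" "\<And>a b. a \<in> state_space \<Longrightarrow> b \<in> state_space \<Longrightarrow> \<omega> \<notin> open_segment a b"
    using assms by (auto simp: pure_state_def extreme_point_of_def)
  have psd: "psd_mat \<omega>" and tr: "mat_trace \<omega> = 1" using ext(1) by (auto simp: state_space_def)
  have herm: "\<And>i j. \<omega>$j$i = cnj (\<omega>$i$j)" by (rule psd_herm[OF psd])
  obtain i where di: "\<omega>$i$i \<noteq> 0"
  proof -
    have "\<exists>i. \<omega>$i$i \<noteq> 0"
    proof (rule ccontr)
      assume "\<not> ?thesis" then have "mat_trace \<omega> = 0" by (simp add: mat_trace_def)
      then show False using tr by simp
    qed
    then show ?thesis using that by blast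
  qed
  define e where "e = (axis i 1 :: complex^'p)"
  define d where "d = \<omega>$i$i"
  have dpos: "Im d = 0" "Re d > 0"
    using psd_diag[OF psd, of i] di by (auto simp: d_def complex_eq_iff)
  have dnz: "d \<noteq> 0" using di d_def by simp
  have cd: "cnj d = d" using dpos by (simp add: complex_eq_iff)
  define P where "P = (\<chi> k l. \<omega>$k$i * \<omega>$i$l / d :: complex^'p^'p)"
  have bfP: "bf x P x = bf x \<omega> e * bf e \<omega> x / d" for x
  proof -
    have "bf x P x = (\<Sum>k\<in>UNIV. \<Sum>l\<in>UNIV. (cnj (x$k) * \<omega>$k$i) * (\<omega>$i$l * x$l) / d)"
      by (simp add: bf_def P_def mult_ac)
    also have "\<dots> = (\<Sum>k\<in>UNIV. cnj (x$k) * \<omega>$k$i) * (\<Sum>l\<in>UNIV. \<omega>$i$l * x$l) / d"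
      by (simp add: sum_product sum_divide_distrib)
    finally show ?thesis by (simp add: e_def bf_axis_left bf_axis_right)
  qed
  have bee: "bf e \<omega> e = d" by (simp add: e_def d_def bf_axis_axis)
  have hx: "bf e \<omega> x = cnj (bf x \<omega> e)" for x by (rule bf_herm[OF herm])
  define R where "R = \<omega> - P"
  have psdP: "psd_mat P"
    unfolding psd_iff
  proof
    fix x
    have dd: "d = of_real (Re d)" using dpos by (simp add: complex_eq_iff)
    have "bf x P x = of_real ((cmod (bf x \<omega> e))\<^sup>2) / of_real (Re d)"
      by (subst dd[symmetric]) (simp add: bfP hx complex_norm_square del: of_real_power)
    also have "\<dots> = of_real ((cmod (bf x \<omega> e))\<^sup>2 / Re d)" by simp
    finally have "bf x P x = of_real ((cmod (bf x \<omega> e))\<^sup>2 / Re d)" .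
    then show "Im (bf x P x) = 0 \<and> Re (bf x P x) \<ge> 0" using dpos by simp
  qed
  have psdR: "psd_mat R"
    unfolding psd_iff
  proof
    fix x
    define c where "c = bf e \<omega> x / d"
    have "bf (x - c *s e) \<omega> (x - c *s e) = bf x \<omega> x - c * bf x \<omega> e - cnj c * bf e \<omega> x + cnj c * c * d"
      by (simp add: bf_diff_left bf_diff_right bf_smult_left bf_smult_right bee algebra_simps)
    also have "\<dots> = bf x R x"
      using dnz cd by (simp add: R_def bf_matdiff bfP c_def hx field_simps)
    finally show "Im (bf x R x) = 0 \<and> Re (bf x R x) \<ge> 0" using psd by (metis psd_iff)
  qed
  define a where "a = Re (mat_trace P)"
  define b where "b = Re (mat_trace R)"
  have trP: "mat_trace P = of_real a"
    using psd_diag[OF psdP] by (simp add: a_def mat_trace_def complex_eq_iff Im_sum)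
  have trR: "mat_trace R = of_real b"
    using psd_diag[OF psdR] by (simp add: b_def mat_trace_def complex_eq_iff Im_sum)
  have ab: "a + b = 1" using tr trP trR by (simp add: R_def trace_diff complex_eq_iff)
  have b0: "b \<ge> 0" using psd_diag[OF psdR] by (simp add: b_def mat_trace_def Re_sum sum_nonneg)
  have a0: "a > 0"
  proof -
    have "Re (P$i$i) \<le> (\<Sum>k\<in>UNIV. Re (P$k$k))"
      by (rule member_le_sum) (use psd_diag[OF psdP] in auto)
    moreover have "P$i$i = d" using dnz by (simp add: P_def d_def)
    ultimately show ?thesis using dpos by (simp add: a_def mat_trace_def Re_sum)
  qed
  have om: "\<omega> = (1/a) *\<^sub>R P"
  proof (cases "b = 0")
    case True
    then have "R = 0" using psd_trace_zero[OF psdR] trR by simp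
    then show ?thesis using ab True by (simp add: R_def)
  next
    case False
    then have b1: "b > 0" using b0 by simp
    define P' where "P' = (1/a) *\<^sub>R P"
    define R' where "R' = (1/b) *\<^sub>R R"
    have P's: "P' \<in> state_space" using psdP a0 trP
      by (simp add: P'_def state_space_def psd_scaleR trace_scaleR)
    have R's: "R' \<in> state_space" using psdR b1 trR
      by (simp add: R'_def state_space_def psd_scaleR trace_scaleR)
    have eq: "\<omega> = (1 - b) *\<^sub>R P' + b *\<^sub>R R'"
    proof -
      have "(1 - b) / a = 1" using ab a0 by simp
      then show ?thesis using b1 by (simp add: P'_def R'_def R_def)
    qed
    have "P' = R'"
    proof (rule ccontr)
      assume "P' \<noteq> R'"
      then have "\<omega> \<in> open_segment P' R'"
        unfolding in_segment using eq b1 ab a0 by (intro conjI exI[of _ b]) auto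
      then show False using ext(2)[OF P's R's] by simp
    qed
    then show ?thesis using eq by (simp add: P'_def algebra_simps flip: scaleR_add_left)
  qed
  define s where "s = sqrt (Re d * a)"
  have s2: "of_real s * of_real s = d * of_real a"
    using dpos a0 by (simp add: s_def complex_eq_iff flip: of_real_mult)
  define u where "u = (\<chi> k. \<omega>$k$i / of_real s :: complex^'p)"
  have "\<omega> = rank1 u"
  proof -
    have "\<omega>$k$l = u$k * cnj (u$l)" for k l
    proof -
      have "\<omega>$k$l = ((1/a) *\<^sub>R P)$k$l" using om by (rule arg_cong)
      also have "\<dots> = \<omega>$k$i * \<omega>$i$l / (d * of_real a)"
        using a0 unfolding vector_scaleR_component P_def by (simp add: scaleR_conv_of_real)
      also have "\<dots> = \<omega>$k$i * cnj (\<omega>$l$i) / (of_real s * of_real s)"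
        using s2 herm[of l i] by simp
      also have "\<dots> = u$k * cnj (u$l)" by (simp add: u_def)
      finally show ?thesis .
    qed
    then show ?thesis by (simp add: vec_eq_iff rank1_def)
  qed
  moreover then have "ip u u = 1" using tr by (simp add: trace_rank1)
  ultimately show ?thesis by blast
qed

definition kv :: "complex^'m \<Rightarrow> complex^'n \<Rightarrow> complex^('m \<times> 'n)" where
  "kv x w = (\<chi> p. x$(fst p) * w$(snd p))"

lemma sum_UNIV_prod: "(\<Sum>p\<in>(UNIV::('a::finite \<times> 'b::finite) set). f p) = (\<Sum>i\<in>UNIV. \<Sum>k\<in>UNIV. f (i,k))"
  by (simp add: sum.cartesian_product flip: UNIV_Times_UNIV)

lemma bf_kv_kron: "bf (kv x w) (kron A B) (kv x w) = bf x A x * bf w B w"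
proof -
  have "bf (kv x w) (kron A B) (kv x w) =
     (\<Sum>i\<in>UNIV. \<Sum>k\<in>UNIV. \<Sum>j\<in>UNIV. \<Sum>l\<in>UNIV. (cnj (x$i) * A$i$j * x$j) * (cnj (w$k) * B$k$l * w$l))"
    unfolding bf_def sum_UNIV_prod by (simp add: kv_def kron_def mult_ac)
  also have "\<dots> = bf x A x * bf w B w"
    unfolding bf_def sum_product by simp
  finally show ?thesis .
qed

definition ptr1 :: "complex^('m::finite \<times> 'n::finite)^('m \<times> 'n) \<Rightarrow> complex^'m^'m" where
  "ptr1 X = (\<chi> a c. \<Sum>b\<in>UNIV. X$(a,b)$(c,b))"
definition ptr2 :: "complex^('m::finite \<times> 'n::finite)^('m \<times> 'n) \<Rightarrow> complex^'n^'n" where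
  "ptr2 X = (\<chi> b d. \<Sum>a\<in>UNIV. X$(a,b)$(a,d))"

lemma ptr1_kron: "mat_trace B = 1 \<Longrightarrow> ptr1 (kron A B) = A"
  by (simp add: vec_eq_iff ptr1_def kron_def mat_trace_def flip: sum_distrib_left)
lemma ptr2_kron: "mat_trace A = 1 \<Longrightarrow> ptr2 (kron A B) = B"
  by (simp add: vec_eq_iff ptr2_def kron_def mat_trace_def flip: sum_distrib_right)
lemma ptr1_lin: "ptr1 ((1 - s) *\<^sub>R X + s *\<^sub>R Y) = (1 - s) *\<^sub>R ptr1 X + s *\<^sub>R ptr1 Y"
  by (simp add: vec_eq_iff ptr1_def scaleR_sum_right sum.distrib)
lemma ptr2_lin: "ptr2 ((1 - s) *\<^sub>R X + s *\<^sub>R Y) = (1 - s) *\<^sub>R ptr2 X + s *\<^sub>R ptr2 Y"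
  by (simp add: vec_eq_iff ptr2_def scaleR_sum_right sum.distrib)

lemma kron_lin_right: "kron A ((1 - s) *\<^sub>R X + s *\<^sub>R Y) = (1 - s) *\<^sub>R kron A X + s *\<^sub>R kron A Y"
  by (simp add: vec_eq_iff kron_def) (simp add: scaleR_conv_of_real algebra_simps)
lemma kron_lin_left: "kron ((1 - s) *\<^sub>R X + s *\<^sub>R Y) A = (1 - s) *\<^sub>R kron X A + s *\<^sub>R kron Y A"
  by (simp add: vec_eq_iff kron_def) (simp add: scaleR_conv_of_real algebra_simps)

lemma kron_sep: "A \<in> state_space \<Longrightarrow> B \<in> state_space \<Longrightarrow> kron A B \<in> separable_states"
  unfolding separable_states_def by (rule hull_inc) blast

lemma convex_sep: "convex separable_states"
  unfolding separable_states_def by (rule convex_convex_hull)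

definition nnr :: "complex \<Rightarrow> bool" where "nnr z \<longleftrightarrow> Im z = 0 \<and> Re z \<ge> 0"

lemma nnr_mult: "nnr a \<Longrightarrow> nnr b \<Longrightarrow> nnr (a * b)"
  by (simp add: nnr_def)
lemma nnr_scale: "nnr a \<Longrightarrow> r \<ge> 0 \<Longrightarrow> nnr (of_real r * a)"
  by (simp add: nnr_def)
lemma nnr_sum: "(\<And>i. i \<in> S \<Longrightarrow> nnr (f i)) \<Longrightarrow> nnr (sum f S)"
  by (simp add: nnr_def Im_sum Re_sum sum_nonneg)
lemma nnr_sum_zero:
  assumes "finite S" "\<And>i. i \<in> S \<Longrightarrow> nnr (f i)" "sum f S = 0" "i \<in> S"
  shows "f i = 0"
proof -
  have "(\<Sum>i\<in>S. Re (f i)) = 0" using assms(3) by (simp flip: Re_sum)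
  then have "Re (f i) = 0" using assms(1,2,4) by (simp add: sum_nonneg_eq_0_iff nnr_def)
  then show ?thesis using assms(2)[OF assms(4)] by (simp add: nnr_def complex_eq_iff)
qed

lemma state_nnr: "A \<in> state_space \<Longrightarrow> nnr (bf x A x)"
  by (simp add: state_space_def psd_iff nnr_def)

lemma bf_sum_mat: "finite S \<Longrightarrow> bf w (\<Sum>v\<in>S. u v *\<^sub>R v) w = (\<Sum>v\<in>S. of_real (u v) * bf w v w)"
proof (induction S rule: finite_induct)
  case empty
  then show ?case by (simp add: bf_def)
next
  case (insert x F)
  then show ?case by (simp add: bf_matadd bf_scaleR)
qed


lemma sep_expl:
  assumes "X \<in> (separable_states :: (complex^('m::finite \<times> 'n::finite)^('m \<times> 'n)) set)"
  shows "\<exists>Sf u. finite Sf \<and> (\<forall>v\<in>Sf. \<exists>A B. v = kron A B \<and> A \<in> (state_space :: (complex^'m^'m) set) \<and> B \<in> (state_space :: (complex^'n^'n) set))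
     \<and> (\<forall>v\<in>Sf. 0 \<le> u v) \<and> sum u Sf = 1 \<and> X = (\<Sum>v\<in>Sf. u v *\<^sub>R v)"
proof -
  have "X \<in> convex hull {kron \<omega> \<sigma> | \<omega> \<sigma>. \<omega> \<in> (state_space :: (complex^'m^'m) set) \<and> \<sigma> \<in> (state_space :: (complex^'n^'n) set)}"
    using assms by (simp add: separable_states_def)
  then obtain Sf u where S: "finite Sf" "Sf \<subseteq> {kron \<omega> \<sigma> | \<omega> \<sigma>. \<omega> \<in> (state_space :: (complex^'m^'m) set) \<and> \<sigma> \<in> (state_space :: (complex^'n^'n) set)}"
     "\<forall>x\<in>Sf. 0 \<le> u x" "sum u Sf = 1" "(\<Sum>v\<in>Sf. u v *\<^sub>R v) = X"
    unfolding convex_hull_explicit mem_Collect_eq by (elim exE conjE) blast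
  have "\<forall>v\<in>Sf. \<exists>A B. v = kron A B \<and> A \<in> (state_space :: (complex^'m^'m) set) \<and> B \<in> (state_space :: (complex^'n^'n) set)"
    using S(2) by blast
  then show ?thesis using S by (intro exI[of _ Sf] exI[of _ u] conjI) auto
qed



lemma sep_nnr:
  assumes "X \<in> (separable_states :: (complex^('m::finite \<times> 'n::finite)^('m \<times> 'n)) set)"
  shows "nnr (bf (kv x w) X (kv x w))"
proof -
  obtain Sf u where S: "finite Sf" "\<forall>v\<in>Sf. \<exists>A B. v = kron A B \<and> A \<in> (state_space :: (complex^'m^'m) set) \<and> B \<in> (state_space :: (complex^'n^'n) set)"
    "\<forall>v\<in>Sf. 0 \<le> u v" "X = (\<Sum>v\<in>Sf. u v *\<^sub>R v)"
    using sep_expl[OF assms] by blast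
  show ?thesis unfolding S(4) bf_sum_mat[OF S(1)]
  proof (rule nnr_sum)
    fix v assume v: "v \<in> Sf"
    then obtain A B where AB: "v = kron A B" "A \<in> (state_space :: (complex^'m^'m) set)" "B \<in> (state_space :: (complex^'n^'n) set)"
      using S(2) by blast
    show "nnr (of_real (u v) * bf (kv x w) v (kv x w))"
      using AB S(3) v by (simp add: bf_kv_kron nnr_scale nnr_mult state_nnr)
  qed
qed

lemma pure_sep:
  assumes "pure_state \<omega>" "A \<in> state_space" "A \<noteq> \<omega>"
  shows "\<exists>x. bf x \<omega> x = 0 \<and> bf x A x \<noteq> 0"
proof -
  obtain u where u: "\<omega> = rank1 u" "ip u u = 1" using pure_rank1[OF assms(1)] by blast
  show ?thesis
  proof (rule ccontr)
    assume "\<not> ?thesis"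
    then have "A = rank1 u"
      using assms(2) u by (intro state_eq_rank1) (auto simp: state_space_def)
    then show False using u assms(3) by simp
  qed
qed

lemma pure_state_in: "pure_state \<omega> \<Longrightarrow> \<omega> \<in> state_space"
  by (simp add: pure_state_def extreme_point_of_def)



definition Dset :: "'a::real_vector set \<Rightarrow> 'a \<Rightarrow> 'a set" where
  "Dset S z = {y\<in>S. \<exists>y'\<in>S. \<exists>t::real. 0 < t \<and> t < 1 \<and> z = (1 - t) *\<^sub>R y + t *\<^sub>R y'}"
definition mid :: "'a::real_vector \<Rightarrow> 'a \<Rightarrow> 'a" where
  "mid a b = (1 - 1/2::real) *\<^sub>R a + (1/2::real) *\<^sub>R b"

lemma nnr_comb_zero:
  assumes "nnr a" "nnr b" "0 < t" "t < 1" "of_real (1 - t) * a + of_real t * b = 0"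
  shows "a = 0"
proof -
  have "(1 - t) * Re a + t * Re b = 0" using arg_cong[OF assms(5), of Re] by simp
  moreover have "(1 - t) * Re a \<ge> 0" "t * Re b \<ge> 0" using assms by (simp_all add: nnr_def)
  ultimately have "(1 - t) * Re a = 0" by linarith
  then have "Re a = 0" using assms(4) by simp
  then show ?thesis using assms(1) by (simp add: nnr_def complex_eq_iff)
qed


definition Qp :: "'a::real_vector set \<Rightarrow> 'a \<Rightarrow> 'a \<Rightarrow> bool" where
  "Qp S a b \<longleftrightarrow> (\<forall>y\<in>Dset S (mid a b). y \<in> closed_segment a b)"


lemma Q_hard:
  fixes \<omega> \<omega>' :: "complex^'m::finite^'m" and \<sigma> \<sigma>' :: "complex^'n::finite^'n"
  assumes "pure_state \<omega>" "pure_state \<omega>'" "\<omega> \<noteq> \<omega>'"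
    and "pure_state \<sigma>" "pure_state \<sigma>'" "\<sigma> \<noteq> \<sigma>'"
  shows "Qp separable_states (kron \<omega> \<sigma>) (kron \<omega>' \<sigma>')"
  unfolding Qp_def
proof
  fix y assume "y \<in> Dset separable_states (mid (kron \<omega> \<sigma>) (kron \<omega>' \<sigma>'))"
  then obtain y' t where yy: "y \<in> separable_states" "y' \<in> separable_states" "0 < t" "t < 1"
    and zeq: "mid (kron \<omega> \<sigma>) (kron \<omega>' \<sigma>') = (1 - t) *\<^sub>R y + t *\<^sub>R y'"
    unfolding Dset_def mem_Collect_eq by (elim conjE bexE exE) (rule that; assumption)
  let ?F = "\<lambda>x w X. bf (kv x w) X (kv x w)"
  have Fy: "?F x w y = 0" if Z: "(bf x \<omega> x = 0 \<and> bf w \<sigma>' w = 0) \<or> (bf x \<omega>' x = 0 \<and> bf w \<sigma> w = 0)" for x w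
  proof -
    have "?F x w (mid (kron \<omega> \<sigma>) (kron \<omega>' \<sigma>')) = 0"
      using Z by (auto simp: mid_def bf_matadd bf_scaleR bf_kv_kron)
    then have "?F x w ((1 - t) *\<^sub>R y + t *\<^sub>R y') = 0" by (simp only: zeq)
    then have e: "of_real (1 - t) * ?F x w y + of_real t * ?F x w y' = 0"
      by (simp only: bf_matadd bf_scaleR)
    have n1: "nnr (?F x w y)" by (rule sep_nnr[OF yy(1)])
    have n2: "nnr (?F x w y')" by (rule sep_nnr[OF yy(2)])
    show ?thesis by (rule nnr_comb_zero[OF n1 n2 yy(3) yy(4) e])
  qed
  obtain Sf u where S: "finite Sf" "\<forall>v\<in>Sf. \<exists>A B. v = kron A B \<and> A \<in> (state_space :: (complex^'m^'m) set) \<and> B \<in> (state_space :: (complex^'n^'n) set)"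
    "\<forall>v\<in>Sf. 0 \<le> u v" "sum u Sf = 1" "y = (\<Sum>v\<in>Sf. u v *\<^sub>R v)"
    using sep_expl[OF yy(1)] by (elim conjE exE) (rule that; assumption)
  have inseg: "v \<in> {kron \<omega> \<sigma>, kron \<omega>' \<sigma>'}" if v: "v \<in> Sf" "u v \<noteq> 0" for v
  proof -
    obtain A B where AB: "v = kron A B" "A \<in> (state_space :: (complex^'m^'m) set)" "B \<in> (state_space :: (complex^'n^'n) set)"
      using bspec[OF S(2) v(1)] by (elim conjE exE) (rule that; assumption)
    have up: "u v > 0" using S(3) v by force
    have Fv: "bf x A x * bf w B w = 0" if Z: "(bf x \<omega> x = 0 \<and> bf w \<sigma>' w = 0) \<or> (bf x \<omega>' x = 0 \<and> bf w \<sigma> w = 0)" for x w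
    proof -
      have "(\<Sum>v\<in>Sf. of_real (u v) * ?F x w v) = 0" using Fy[OF Z] S(5) bf_sum_mat[OF S(1)] by simp
      then have "of_real (u v) * ?F x w v = 0"
        by (rule nnr_sum_zero[OF S(1) _ _ v(1), rotated]) (use S(2,3) in \<open>auto simp: bf_kv_kron nnr_scale nnr_mult state_nnr\<close>)
      then show ?thesis using up AB by (simp add: bf_kv_kron)
    qed
    have c1: "A = \<omega> \<or> B = \<sigma>'"
    proof (rule ccontr)
      assume "\<not> ?thesis"
      then obtain x w where "bf x \<omega> x = 0" "bf x A x \<noteq> 0" "bf w \<sigma>' w = 0" "bf w B w \<noteq> 0"
        using pure_sep[OF assms(1) AB(2)] pure_sep[OF assms(5) AB(3)] by blast
      then show False using Fv[of x w] by simp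
    qed
    have c2: "A = \<omega>' \<or> B = \<sigma>"
    proof (rule ccontr)
      assume "\<not> ?thesis"
      then obtain x w where "bf x \<omega>' x = 0" "bf x A x \<noteq> 0" "bf w \<sigma> w = 0" "bf w B w \<noteq> 0"
        using pure_sep[OF assms(2) AB(2)] pure_sep[OF assms(4) AB(3)] by blast
      then show False using Fv[of x w] by simp
    qed
    show ?thesis using c1 c2 assms(3,6) AB(1) by auto
  qed
  have "y = (\<Sum>v\<in>Sf. u v *\<^sub>R (if u v = 0 then kron \<omega> \<sigma> else v))"
    unfolding S(5) by (rule sum.cong) auto
  also have "\<dots> \<in> convex hull {kron \<omega> \<sigma>, kron \<omega>' \<sigma>'}"
    by (rule convex_sum[OF S(1) convex_convex_hull S(4)]) (use S(3) inseg in \<open>auto intro: hull_inc\<close>)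
  finally show "y \<in> closed_segment (kron \<omega> \<sigma>) (kron \<omega>' \<sigma>')"
    by (simp add: segment_convex_hull)
qed


lemma ip_add_left: "ip (x + y) u = ip x u + ip y u"
  by (simp add: ip_def algebra_simps sum.distrib)
lemma ip_diff_left: "ip (x - y) u = ip x u - ip y u"
  by (simp add: ip_def algebra_simps sum_subtractf)
lemma ip_smult_left: "ip (c *s y) u = cnj c * ip y u"
  by (simp add: ip_def algebra_simps sum_distrib_left)
lemma ip_swap: "ip y x = cnj (ip x y)"
  by (simp add: ip_def mult.commute)
lemma ip_self: "ip x x = of_real (\<Sum>k\<in>UNIV. (cmod (x$k))\<^sup>2)"
  by (simp only: ip_def of_real_sum complex_norm_square) (simp add: mult.commute)
lemma ip_self_zero: "ip x x = 0 \<Longrightarrow> x = 0"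
proof -
  assume "ip x x = 0"
  then have "(\<Sum>k\<in>UNIV. (cmod (x$k))\<^sup>2) = 0" using ip_self[of x] by (metis of_real_eq_0_iff)
  then have "\<And>k. (cmod (x$k))\<^sup>2 = 0" by (simp add: sum_nonneg_eq_0_iff)
  then show "x = 0" by (simp add: vec_eq_iff)
qed
lemma ip_self_nonneg: "Im (ip x x) = 0 \<and> Re (ip x x) \<ge> 0"
  by (simp add: ip_self sum_nonneg)

lemma rank1_state: "ip w w = of_real r \<Longrightarrow> r > 0 \<Longrightarrow> (1 / r) *\<^sub>R rank1 w \<in> state_space"
  unfolding state_space_def
  by (auto simp: psd_iff bf_scaleR bf_rank1 trace_scaleR trace_rank1 complex_norm_square[symmetric] simp del: of_real_power)

lemma rank1_smult: "cmod c = 1 \<Longrightarrow> rank1 (c *s v) = rank1 v"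
proof -
  assume "cmod c = 1"
  then have "c * cnj c = 1" by (simp add: complex_norm_square[symmetric])
  then show ?thesis by (simp add: rank1_def vec_eq_iff)
qed

lemma bloch:
  fixes \<sigma> \<sigma>' :: "complex^'n::finite^'n"
  assumes "pure_state \<sigma>" "pure_state \<sigma>'" "\<sigma> \<noteq> \<sigma>'"
  shows "\<exists>\<tau> \<tau>' t. \<tau> \<in> state_space \<and> \<tau>' \<in> state_space \<and> 0 < t \<and> t < 1 \<and>
     mid \<sigma> \<sigma>' = (1 - t) *\<^sub>R \<tau> + t *\<^sub>R \<tau>' \<and> \<tau> \<notin> closed_segment \<sigma> \<sigma>'"
proof -
  obtain v where v: "\<sigma> = rank1 v" "ip v v = 1" using pure_rank1[OF assms(1)] by blast
  obtain v0 where v0: "\<sigma>' = rank1 v0" "ip v0 v0 = 1" using pure_rank1[OF assms(2)] by blast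
  define c0 where "c0 = ip v v0"
  define ph where "ph = (if c0 = 0 then 1 else cnj c0 / of_real (cmod c0))"
  define v' where "v' = ph *s v0"
  have ph1: "cmod ph = 1" by (simp add: ph_def norm_divide)
  have s': "\<sigma>' = rank1 v'" using v0 ph1 by (simp add: v'_def rank1_smult)
  define c where "c = cmod c0"
  have ipvv': "ip v v' = of_real c"
  proof (cases "c0 = 0")
    case True then show ?thesis by (simp add: v'_def ip_smult ph_def c_def c0_def)
  next
    case False
    have "cnj c0 * c0 = of_real (cmod c0) * of_real (cmod c0)"
      by (simp only: complex_norm_square[symmetric] of_real_mult[symmetric] power2_eq_square mult.commute)
    then have "ph * c0 = of_real (cmod c0)"
      using False by (simp add: ph_def)
    then show ?thesis by (simp add: v'_def ip_smult c0_def c_def mult.commute)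
  qed
  have ipv'v: "ip v' v = of_real c" using ipvv' by (simp add: ip_swap[of v' v])
  have ipv'v': "ip v' v' = 1" using v0 ph1 by (simp add: v'_def ip_smult ip_smult_left mult.assoc complex_norm_square[symmetric] flip: mult.assoc)
  have c0': "c \<ge> 0" by (simp add: c_def)
  have dd: "ip (v - v') (v - v') = of_real (2 - 2 * c)"
    by (simp add: ip_diff ip_diff_left v(2) ipvv' ipv'v ipv'v')
  have c1: "c < 1"
  proof (rule ccontr)
    assume "\<not> c < 1"
    moreover have "Re (ip (v - v') (v - v')) \<ge> 0" using ip_self_nonneg by blast
    ultimately have "c = 1" using dd by simp
    then have "v - v' = 0" using dd by (intro ip_self_zero) simp
    then show False using assms(3) v(1) s' by simp
  qed
  define wp where "wp = v + v'"
  define wm where "wm = v - v'"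
  have ipp: "ip wp wp = of_real (2 + 2 * c)"
    by (simp add: wp_def ip_add ip_add_left v(2) ipvv' ipv'v ipv'v')
  have ipm: "ip wm wm = of_real (2 - 2 * c)" using dd by (simp add: wm_def)
  define \<tau> where "\<tau> = (1 / (2 + 2 * c)) *\<^sub>R rank1 wp"
  define \<tau>' where "\<tau>' = (1 / (2 - 2 * c)) *\<^sub>R rank1 wm"
  define t where "t = (1 - c) / 2"
  have st: "\<tau> \<in> state_space" unfolding \<tau>_def by (rule rank1_state[OF ipp]) (use c0' in simp)
  have st': "\<tau>' \<in> state_space" unfolding \<tau>'_def by (rule rank1_state[OF ipm]) (use c1 in simp)
  have t01: "0 < t" "t < 1" using c0' c1 by (auto simp: t_def)
  have e1: "(1 - t) * (1 / (2 + 2 * c)) = 1/4" using c0' by (simp add: t_def field_simps)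
  have e2: "t * (1 / (2 - 2 * c)) = 1/4" using c1 by (simp add: t_def field_simps)
  have midq: "mid \<sigma> \<sigma>' = (1 - t) *\<^sub>R \<tau> + t *\<^sub>R \<tau>'"
  proof -
    have "(1 - t) *\<^sub>R \<tau> + t *\<^sub>R \<tau>' = (1/4) *\<^sub>R rank1 wp + (1/4) *\<^sub>R rank1 wm"
      by (simp only: \<tau>_def \<tau>'_def scaleR_scaleR e1 e2)
    also have "\<dots> = mid \<sigma> \<sigma>'"
      by (simp add: vec_eq_iff mid_def v(1) s' rank1_def wp_def wm_def) (simp add: scaleR_conv_of_real algebra_simps)
    finally show ?thesis by simp
  qed
  have notin: "\<tau> \<notin> closed_segment \<sigma> \<sigma>'"
  proof
    assume "\<tau> \<in> closed_segment \<sigma> \<sigma>'"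
    then obtain s where s: "0 \<le> s" "s \<le> 1" "\<tau> = (1 - s) *\<^sub>R \<sigma> + s *\<^sub>R \<sigma>'"
      by (auto simp: in_segment)
    have "ip wp wm = 0" by (simp add: wp_def wm_def ip_add_left ip_diff v(2) ipvv' ipv'v ipv'v')
    then have l: "bf wm \<tau> wm = 0" by (simp add: \<tau>_def bf_scaleR bf_rank1)
    have a1: "ip v wm = of_real (1 - c)" by (simp add: wm_def ip_diff v(2) ipvv')
    have a2: "ip v' wm = - of_real (1 - c)" by (simp add: wm_def ip_diff ipv'v' ipv'v)
    have "bf wm \<tau> wm = of_real ((1 - s) * (1 - c)^2 + s * (1 - c)^2)"
      unfolding s(3) bf_matadd bf_scaleR v(1) s' bf_rank1 a1 a2
      by (simp add: power2_eq_square algebra_simps)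
    also have "\<dots> = of_real ((1 - c)^2)" by (simp add: algebra_simps)
    finally show False using l c1 by simp
  qed
  show ?thesis using st st' t01 midq notin by blast
qed

lemma notQ1:
  fixes \<omega> :: "complex^'m::finite^'m" and \<sigma> \<sigma>' :: "complex^'n::finite^'n"
  assumes om: "\<omega> \<in> state_space" and "pure_state \<sigma>" "pure_state \<sigma>'" "\<sigma> \<noteq> \<sigma>'"
  shows "\<not> Qp separable_states (kron \<omega> \<sigma>) (kron \<omega> \<sigma>')"
proof
  assume Q: "Qp separable_states (kron \<omega> \<sigma>) (kron \<omega> \<sigma>')"
  obtain \<tau> \<tau>' t where b: "\<tau> \<in> state_space" "\<tau>' \<in> state_space" "0 < t" "t < 1"
     "mid \<sigma> \<sigma>' = (1 - t) *\<^sub>R \<tau> + t *\<^sub>R \<tau>'" "\<tau> \<notin> closed_segment \<sigma> \<sigma>'"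
    using bloch[OF assms(2-4)] by (elim exE conjE) (rule that; assumption)
  have "mid (kron \<omega> \<sigma>) (kron \<omega> \<sigma>') = kron \<omega> (mid \<sigma> \<sigma>')"
    by (simp only: mid_def kron_lin_right)
  also have "\<dots> = (1 - t) *\<^sub>R kron \<omega> \<tau> + t *\<^sub>R kron \<omega> \<tau>'"
    by (simp only: b(5) kron_lin_right)
  finally have "kron \<omega> \<tau> \<in> Dset separable_states (mid (kron \<omega> \<sigma>) (kron \<omega> \<sigma>'))"
    unfolding Dset_def using kron_sep[OF om b(1)] kron_sep[OF om b(2)] b(3,4) by blast
  then have "kron \<omega> \<tau> \<in> closed_segment (kron \<omega> \<sigma>) (kron \<omega> \<sigma>')" using Q by (simp add: Qp_def)
  then obtain s where s: "0 \<le> s" "s \<le> 1" "kron \<omega> \<tau> = (1 - s) *\<^sub>R kron \<omega> \<sigma> + s *\<^sub>R kron \<omega> \<sigma>'"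
    by (auto simp: in_segment)
  have tr: "mat_trace \<omega> = 1" using om by (simp add: state_space_def)
  have "\<tau> = ptr2 (kron \<omega> \<tau>)" using tr by (simp add: ptr2_kron)
  also have "\<dots> = (1 - s) *\<^sub>R \<sigma> + s *\<^sub>R \<sigma>'" using tr by (simp only: s(3) ptr2_lin ptr2_kron)
  finally show False using b(6) s(1,2) by (auto simp: in_segment)
qed

lemma notQ2:
  fixes \<sigma> :: "complex^'n::finite^'n" and \<omega> \<omega>' :: "complex^'m::finite^'m"
  assumes sg: "\<sigma> \<in> state_space" and "pure_state \<omega>" "pure_state \<omega>'" "\<omega> \<noteq> \<omega>'"
  shows "\<not> Qp separable_states (kron \<omega> \<sigma>) (kron \<omega>' \<sigma>)"
proof
  assume Q: "Qp separable_states (kron \<omega> \<sigma>) (kron \<omega>' \<sigma>)"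
  obtain \<tau> \<tau>' t where b: "\<tau> \<in> state_space" "\<tau>' \<in> state_space" "0 < t" "t < 1"
     "mid \<omega> \<omega>' = (1 - t) *\<^sub>R \<tau> + t *\<^sub>R \<tau>'" "\<tau> \<notin> closed_segment \<omega> \<omega>'"
    using bloch[OF assms(2-4)] by (elim exE conjE) (rule that; assumption)
  have "mid (kron \<omega> \<sigma>) (kron \<omega>' \<sigma>) = kron (mid \<omega> \<omega>') \<sigma>"
    by (simp only: mid_def kron_lin_left)
  also have "\<dots> = (1 - t) *\<^sub>R kron \<tau> \<sigma> + t *\<^sub>R kron \<tau>' \<sigma>"
    by (simp only: b(5) kron_lin_left)
  finally have "kron \<tau> \<sigma> \<in> Dset separable_states (mid (kron \<omega> \<sigma>) (kron \<omega>' \<sigma>))"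
    unfolding Dset_def using kron_sep[OF b(1) sg] kron_sep[OF b(2) sg] b(3,4) by blast
  then have "kron \<tau> \<sigma> \<in> closed_segment (kron \<omega> \<sigma>) (kron \<omega>' \<sigma>)" using Q by (simp add: Qp_def)
  then obtain s where s: "0 \<le> s" "s \<le> 1" "kron \<tau> \<sigma> = (1 - s) *\<^sub>R kron \<omega> \<sigma> + s *\<^sub>R kron \<omega>' \<sigma>"
    by (auto simp: in_segment)
  have tr: "mat_trace \<sigma> = 1" using sg by (simp add: state_space_def)
  have "\<tau> = ptr1 (kron \<tau> \<sigma>)" using tr by (simp add: ptr1_kron)
  also have "\<dots> = (1 - s) *\<^sub>R \<omega> + s *\<^sub>R \<omega>'" using tr by (simp only: s(3) ptr1_lin ptr1_kron)
  finally show False using b(6) s(1,2) by (auto simp: in_segment)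
qed

lemma Qp_transfer:
  assumes f: "affine_iso f S T" and cS: "convex S" and ab: "a \<in> S" "b \<in> S" and Q: "Qp S a b"
  shows "Qp T (f a) (f b)"
  unfolding Qp_def
proof
  have bij: "bij_betw f S T" and aff: "\<And>x y t. x \<in> S \<Longrightarrow> y \<in> S \<Longrightarrow> 0 \<le> t \<Longrightarrow> t \<le> 1 \<Longrightarrow>
        f ((1 - t) *\<^sub>R x + t *\<^sub>R y) = (1 - t) *\<^sub>R f x + t *\<^sub>R f y"
    using f by (auto simp: affine_iso_def)
  fix y assume "y \<in> Dset T (mid (f a) (f b))"
  then obtain y' t where yy: "y \<in> T" "y' \<in> T" "0 < t" "t < 1"
    and zeq: "mid (f a) (f b) = (1 - t) *\<^sub>R y + t *\<^sub>R y'"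
    unfolding Dset_def mem_Collect_eq by (elim conjE bexE exE) (rule that; assumption)
  obtain x where x: "x \<in> S" "y = f x" using yy(1) bij by (metis bij_betw_imp_surj_on imageE)
  obtain x' where x': "x' \<in> S" "y' = f x'" using yy(2) bij by (metis bij_betw_imp_surj_on imageE)
  have inj: "inj_on f S" using bij by (simp add: bij_betw_def)
  have m: "mid a b \<in> S" unfolding mid_def using cS ab by (simp add: convex_def)
  have c: "(1 - t) *\<^sub>R x + t *\<^sub>R x' \<in> S" using cS x(1) x'(1) yy(3,4) by (simp add: convex_def)
  have "f (mid a b) = mid (f a) (f b)" unfolding mid_def by (rule aff[OF ab]) auto
  also have "\<dots> = f ((1 - t) *\<^sub>R x + t *\<^sub>R x')" using zeq x x' yy(3,4) aff[OF x(1) x'(1), of t] by simp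
  finally have "mid a b = (1 - t) *\<^sub>R x + t *\<^sub>R x'" using inj m c by (simp add: inj_on_def)
  then have "x \<in> Dset S (mid a b)" unfolding Dset_def using x(1) x'(1) yy(3,4) by blast
  then have "x \<in> closed_segment a b" using Q by (simp add: Qp_def)
  then obtain s where s: "0 \<le> s" "s \<le> 1" "x = (1 - s) *\<^sub>R a + s *\<^sub>R b" by (auto simp: in_segment)
  have "y = (1 - s) *\<^sub>R f a + s *\<^sub>R f b" using x(2) s aff[OF ab, of s] by simp
  then show "y \<in> closed_segment (f a) (f b)" using s(1,2) by (auto simp: in_segment)
qed

lemma affine_iso_inv:
  assumes f: "affine_iso f S T" and cS: "convex S"
  shows "affine_iso (inv_into S f) T S"
proof -
  have bij: "bij_betw f S T" and aff: "\<And>x y t. x \<in> S \<Longrightarrow> y \<in> S \<Longrightarrow> 0 \<le> t \<Longrightarrow> t \<le> 1 \<Longrightarrow>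
        f ((1 - t) *\<^sub>R x + t *\<^sub>R y) = (1 - t) *\<^sub>R f x + t *\<^sub>R f y"
    using f by (auto simp: affine_iso_def)
  let ?g = "inv_into S f"
  have bg: "bij_betw ?g T S" by (rule bij_betw_inv_into[OF bij])
  have "?g ((1 - t) *\<^sub>R x + t *\<^sub>R y) = (1 - t) *\<^sub>R ?g x + t *\<^sub>R ?g y"
    if xy: "x \<in> T" "y \<in> T" "0 \<le> t" "t \<le> 1" for x y t
  proof -
    have gx: "?g x \<in> S" "f (?g x) = x" using bij xy(1) by (auto simp: bij_betw_def inv_into_into f_inv_into_f)
    have gy: "?g y \<in> S" "f (?g y) = y" using bij xy(2) by (auto simp: bij_betw_def inv_into_into f_inv_into_f)
    have c: "(1 - t) *\<^sub>R ?g x + t *\<^sub>R ?g y \<in> S" using cS gx(1) gy(1) xy(3,4) by (simp add: convex_def)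
    have "f ((1 - t) *\<^sub>R ?g x + t *\<^sub>R ?g y) = (1 - t) *\<^sub>R x + t *\<^sub>R y"
      using aff[OF gx(1) gy(1) xy(3,4)] gx gy by simp
    then show ?thesis using c bij by (metis bij_betw_def inv_into_f_f)
  qed
  then show ?thesis using bg by (simp add: affine_iso_def)
qed

lemma Qp_back:
  assumes f: "affine_iso f S T" and cS: "convex S" and cT: "convex T" and ab: "a \<in> S" "b \<in> S"
    and Q: "Qp T (f a) (f b)"
  shows "Qp S a b"
proof -
  have g: "affine_iso (inv_into S f) T S" by (rule affine_iso_inv[OF f cS])
  have bij: "bij_betw f S T" using f by (simp add: affine_iso_def)
  have "f a \<in> T" "f b \<in> T" using bij ab by (auto simp: bij_betw_def)
  then have "Qp S (inv_into S f (f a)) (inv_into S f (f b))" by (rule Qp_transfer[OF g cT _ _ Q])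
  then show ?thesis using bij ab by (simp add: bij_betw_def inv_into_f_f)
qed

lemma kron_ne1:
  assumes "A \<noteq> A'" "B \<in> state_space" "B' \<in> state_space"
  shows "kron A B \<noteq> kron A' B'"
proof
  assume eq: "kron A B = kron A' B'"
  have t: "mat_trace B = 1" "mat_trace B' = 1" using assms(2,3) by (auto simp: state_space_def)
  have "A = ptr1 (kron A B)" using t by (simp add: ptr1_kron)
  also have "\<dots> = ptr1 (kron A' B')" by (simp only: eq)
  also have "\<dots> = A'" using t by (simp add: ptr1_kron)
  finally show False using assms(1) by simp
qed

theorem mainTheorem7:
  fixes \<Phi> :: "complex^('m::finite \<times> 'n::finite)^('m \<times> 'n) \<Rightarrow> complex^('m2::finite \<times> 'n2::finite)^('m2 \<times> 'n2)"
    and \<omega>1 \<omega>2 :: "complex^'m^'m" and \<sigma>1 \<sigma>2 :: "complex^'n^'n"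
  assumes "affine_iso \<Phi> separable_states separable_states"
    and "pure_state \<omega>1" and "pure_state \<omega>2" and "\<omega>1 \<noteq> \<omega>2"
    and "pure_state \<sigma>1" and "pure_state \<sigma>2" and "\<sigma>1 \<noteq> \<sigma>2"
  shows "\<not> (\<exists>(\<rho>1::complex^'m2^'m2) \<rho>2 \<rho>3 (\<tau>1::complex^'n2^'n2) \<tau>2 \<tau>3.
            pure_state \<rho>1 \<and> pure_state \<rho>2 \<and> pure_state \<rho>3 \<and>
            pure_state \<tau>1 \<and> pure_state \<tau>2 \<and> pure_state \<tau>3 \<and>
            \<Phi> (kron \<omega>1 \<sigma>1) = kron \<rho>1 \<tau>1 \<and>
            \<Phi> (kron \<omega>1 \<sigma>2) = kron \<rho>1 \<tau>2 \<and>
            \<Phi> (kron \<omega>2 \<sigma>1) = kron \<rho>2 \<tau>3 \<and>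
            \<Phi> (kron \<omega>2 \<sigma>2) = kron \<rho>3 \<tau>3)"
proof
  assume "\<exists>(\<rho>1::complex^'m2^'m2) \<rho>2 \<rho>3 (\<tau>1::complex^'n2^'n2) \<tau>2 \<tau>3.
            pure_state \<rho>1 \<and> pure_state \<rho>2 \<and> pure_state \<rho>3 \<and>
            pure_state \<tau>1 \<and> pure_state \<tau>2 \<and> pure_state \<tau>3 \<and>
            \<Phi> (kron \<omega>1 \<sigma>1) = kron \<rho>1 \<tau>1 \<and>
            \<Phi> (kron \<omega>1 \<sigma>2) = kron \<rho>1 \<tau>2 \<and>
            \<Phi> (kron \<omega>2 \<sigma>1) = kron \<rho>2 \<tau>3 \<and>
            \<Phi> (kron \<omega>2 \<sigma>2) = kron \<rho>3 \<tau>3"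
  then obtain \<rho>1 \<rho>2 \<rho>3 :: "complex^'m2^'m2" and \<tau>1 \<tau>2 \<tau>3 :: "complex^'n2^'n2" where
    p: "pure_state \<rho>1" "pure_state \<rho>2" "pure_state \<rho>3"
       "pure_state \<tau>1" "pure_state \<tau>2" "pure_state \<tau>3"
    and eA: "\<Phi> (kron \<omega>1 \<sigma>1) = kron \<rho>1 \<tau>1"
    and eB: "\<Phi> (kron \<omega>1 \<sigma>2) = kron \<rho>1 \<tau>2"
    and eC: "\<Phi> (kron \<omega>2 \<sigma>1) = kron \<rho>2 \<tau>3"
    and eD: "\<Phi> (kron \<omega>2 \<sigma>2) = kron \<rho>3 \<tau>3"
    by (elim exE conjE) (rule that; assumption)
  note f = assms(1)
  have cS: "convex (separable_states :: (complex^('m \<times> 'n)^('m \<times> 'n)) set)" by (rule convex_sep)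
  have cT: "convex (separable_states :: (complex^('m2 \<times> 'n2)^('m2 \<times> 'n2)) set)" by (rule convex_sep)
  have inj: "inj_on \<Phi> separable_states" using f by (simp add: affine_iso_def bij_betw_def)
  have so: "\<omega>1 \<in> state_space" "\<omega>2 \<in> state_space" "\<sigma>1 \<in> state_space" "\<sigma>2 \<in> state_space"
    using assms pure_state_in by auto
  have sr: "\<rho>1 \<in> state_space" "\<rho>2 \<in> state_space" "\<rho>3 \<in> state_space"
    "\<tau>1 \<in> state_space" "\<tau>2 \<in> state_space" "\<tau>3 \<in> state_space"
    using p pure_state_in by auto
  have A: "kron \<omega>1 \<sigma>1 \<in> separable_states" by (rule kron_sep[OF so(1,3)])
  have B: "kron \<omega>1 \<sigma>2 \<in> separable_states" by (rule kron_sep[OF so(1,4)])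
  have C: "kron \<omega>2 \<sigma>1 \<in> separable_states" by (rule kron_sep[OF so(2,3)])
  have D: "kron \<omega>2 \<sigma>2 \<in> separable_states" by (rule kron_sep[OF so(2,4)])
  have QAD: "Qp separable_states (kron \<rho>1 \<tau>1) (kron \<rho>3 \<tau>3)"
    using Qp_transfer[OF f cS A D Q_hard[OF assms(2,3,4,5,6,7)]] eA eD by simp
  have AD: "kron \<omega>1 \<sigma>1 \<noteq> kron \<omega>2 \<sigma>2" by (rule kron_ne1[OF assms(4) so(3,4)])
  have BC: "kron \<omega>1 \<sigma>2 \<noteq> kron \<omega>2 \<sigma>1" by (rule kron_ne1[OF assms(4) so(4,3)])
  have r13: "\<rho>1 \<noteq> \<rho>3"
  proof
    assume r: "\<rho>1 = \<rho>3"
    have "\<tau>1 \<noteq> \<tau>3"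
    proof
      assume "\<tau>1 = \<tau>3"
      then have "\<Phi> (kron \<omega>1 \<sigma>1) = \<Phi> (kron \<omega>2 \<sigma>2)" using eA eD r by simp
      then show False using inj A D AD by (auto simp: inj_on_def)
    qed
    then show False using notQ1[OF sr(1) p(4) p(6)] QAD r by simp
  qed
  have t13: "\<tau>1 \<noteq> \<tau>3"
  proof
    assume t: "\<tau>1 = \<tau>3"
    show False using notQ2[OF sr(4) p(1) p(3) r13] QAD t by simp
  qed
  have r12: "\<rho>1 = \<rho>2"
  proof (rule ccontr)
    assume "\<rho>1 \<noteq> \<rho>2"
    then have "Qp separable_states (\<Phi> (kron \<omega>1 \<sigma>1)) (\<Phi> (kron \<omega>2 \<sigma>1))"
      using Q_hard[OF p(1) p(2) _ p(4) p(6) t13] eA eC by simp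
    then have "Qp separable_states (kron \<omega>1 \<sigma>1) (kron \<omega>2 \<sigma>1)" by (rule Qp_back[OF f cS cT A C])
    then show False using notQ2[OF so(3) assms(2,3,4)] by simp
  qed
  have t23: "\<tau>2 = \<tau>3"
  proof (rule ccontr)
    assume "\<tau>2 \<noteq> \<tau>3"
    then have "Qp separable_states (\<Phi> (kron \<omega>1 \<sigma>2)) (\<Phi> (kron \<omega>2 \<sigma>2))"
      using Q_hard[OF p(1) p(3) r13 p(5) p(6)] eB eD by simp
    then have "Qp separable_states (kron \<omega>1 \<sigma>2) (kron \<omega>2 \<sigma>2)" by (rule Qp_back[OF f cS cT B D])
    then show False using notQ2[OF so(4) assms(2,3,4)] by simp
  qed
  have "\<Phi> (kron \<omega>1 \<sigma>2) = \<Phi> (kron \<omega>2 \<sigma>1)" using eB eC r12 t23 by simp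
  then show False using inj B C BC by (auto simp: inj_on_def)
qed

end
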